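(* Let $\mathbb{X}$ be a real or complex Banach algebra with identity, $\mathcal{G}$ its group of units, $k\ge1$ an integer, and $g_n:\mathbb{X}\to\mathbb{X}$ ($n\ge0$) functions with $|g_n(\xi)|\le\sigma|\xi|$ for all $\xi\in\mathbb{X}$, all $n$, for some real $\sigma>0$. Let $a\in\mathcal{G}$ and $b_0,\dots,b_k\in\mathbb{X}$ with $b_k\ne0$. If $|a|<1$, $$b_0a^k+b_1a^{k-1}+\cdots+b_{k-1}a+b_k=0,$$ and $$\sum_{i=0}^{k-1}\big|b_0a^i+b_1a^{i-1}+\cdots+b_i\big|<\frac1\sigma,$$ then every solution of $$x_{n+1}=ax_n+g_n\big(b_0x_n+b_1x_{n-1}+\cdots+b_kx_{n-k}\big),\quad n\ge0,$$ with initial values in $\mathbb{X}$ converges to $0$.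
   Context: A Banach algebra with identity is a Banach space $\mathbb{X}$ (norm $|\cdot|$) with an associative bilinear multiplication satisfying $|xy|\le|x||y|$ and identity $1$ with $|1|=1$; $\mathcal{G}$ is the set of invertible elements. *)

theory Defs
  imports "HOL-Analysis.Analysis"
begin

definition invertible_elem :: "'a::ring_1 \<Rightarrow> bool" where
  "invertible_elem a \<longleftrightarrow> (\<exists>c. a * c = 1 \<and> c * a = 1)"

end

theory Submission
  imports Defs
begin

lemma conv_id:
  fixes a :: "'a::ring_1" and x :: "int \<Rightarrow> 'a" and u :: "nat \<Rightarrow> 'a"
  assumes rec: "\<And>n::nat. x (int n + 1) = a * x (int n) + u n"
  shows "(\<Sum>j=0..K. b j * x (int (m+K) - int j)) =
     (\<Sum>j=0..K. b j * a^(K-j)) * x (int m) + (\<Sum>i<K. (\<Sum>j=0..i. b j * a^(i-j)) * u (m+K-1-i))"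
proof (induction K arbitrary: m)
  case 0
  then show ?case by simp
next
  case (Suc K)
  define C where "C = (\<lambda>i. (\<Sum>j=0..i. b j * a^(i-j)))"
  have CS: "C (Suc K) = C K * a + b (Suc K)"
  proof -
    have "C (Suc K) = (\<Sum>j=0..K. b j * a^(Suc K - j)) + b (Suc K)"
      unfolding C_def by (simp add: sum.atLeast0_atMost_Suc)
    also have "(\<Sum>j=0..K. b j * a^(Suc K - j)) = (\<Sum>j=0..K. b j * a^(K - j) * a)"
      by (rule sum.cong) (auto simp: Suc_diff_le mult.assoc power_commutes)
    also have "\<dots> = C K * a" unfolding C_def by (simp add: sum_distrib_right)
    finally show ?thesis .
  qed
  have "(\<Sum>j=0..Suc K. b j * x (int (m+Suc K) - int j)) =
      (\<Sum>j=0..K. b j * x (int (Suc m+K) - int j)) + b (Suc K) * x (int m)"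
    by (simp add: sum.atLeast0_atMost_Suc)
  also have "(\<Sum>j=0..K. b j * x (int (Suc m+K) - int j)) =
      C K * x (int (Suc m)) + (\<Sum>i<K. C i * u (Suc m+K-1-i))"
    using Suc.IH[of "Suc m"] unfolding C_def by simp
  also have "x (int (Suc m)) = a * x (int m) + u m" using rec[of m] by (simp add: add.commute)
  also have "(\<Sum>i<K. C i * u (Suc m+K-1-i)) = (\<Sum>i<K. C i * u (m+Suc K-1-i))"
    by simp
  finally have "(\<Sum>j=0..Suc K. b j * x (int (m+Suc K) - int j)) =
      C K * (a * x (int m) + u m) + (\<Sum>i<K. C i * u (m+Suc K-1-i)) + b (Suc K) * x (int m)" .
  also have "\<dots> = (C K * a + b (Suc K)) * x (int m) + ((\<Sum>i<K. C i * u (m+Suc K-1-i)) + C K * u (m + Suc K - 1 - K))"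
    by (simp add: algebra_simps)
  also have "\<dots> = C (Suc K) * x (int m) + (\<Sum>i<Suc K. C i * u (m+Suc K-1-i))"
    using CS by simp
  finally show ?case unfolding C_def .
qed

lemma decay:
  fixes Y w :: "nat \<Rightarrow> real" and k :: nat
  assumes k: "k \<ge> 1" and Y0: "\<And>n. Y n \<ge> 0" and w0: "\<And>i. w i \<ge> 0"
    and ws: "(\<Sum>i<k. w i) < 1"
    and rec: "\<And>n. k \<le> n \<Longrightarrow> Y n \<le> (\<Sum>i<k. w i * Y (n-1-i))"
  shows "Y \<longlonglongrightarrow> 0"
proof -
  define \<theta> where "\<theta> = (\<Sum>i<k. w i)"
  define M where "M = (\<Sum>n<k. Y n)"
  have th0: "\<theta> \<ge> 0" unfolding \<theta>_def using w0 by (simp add: sum_nonneg)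
  have th1: "\<theta> < 1" using ws \<theta>_def by simp
  have M0: "M \<ge> 0" unfolding M_def using Y0 by (simp add: sum_nonneg)
  have bound: "Y n \<le> M * \<theta> ^ (n div k)" for n
  proof (induction n rule: less_induct)
    case (less n)
    show ?case
    proof (cases "n < k")
      case True
      have "Y n \<le> M" unfolding M_def
        using member_le_sum[of n "{..<k}" Y] True Y0 by auto
      then show ?thesis using True by simp
    next
      case False
      hence nk: "k \<le> n" by simp
      have q1: "n div k \<ge> 1" using nk k by (simp add: div_greater_zero_iff Suc_le_eq)
      have "Y n \<le> (\<Sum>i<k. w i * Y (n-1-i))" using rec nk by simp
      also have "\<dots> \<le> (\<Sum>i<k. w i * (M * \<theta> ^ (n div k - 1)))"
      proof (rule sum_mono)
        fix i assume i: "i \<in> {..<k}"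
        have lt: "n-1-i < n" using nk k by simp
        have "(n - k) div k \<le> (n-1-i) div k" using i nk by (intro div_le_mono) auto
        moreover have "(n - k) div k = n div k - 1" using nk k by (simp add: le_div_geq)
        ultimately have "n div k - 1 \<le> (n-1-i) div k" by simp
        hence "\<theta> ^ ((n-1-i) div k) \<le> \<theta> ^ (n div k - 1)"
          using th0 th1 by (intro power_decreasing) auto
        hence "Y (n-1-i) \<le> M * \<theta> ^ (n div k - 1)"
          using less.IH[OF lt] M0 by (meson order_trans mult_left_mono)
        thus "w i * Y (n-1-i) \<le> w i * (M * \<theta> ^ (n div k - 1))"
          using w0 by (simp add: mult_left_mono)
      qed
      also have "\<dots> = \<theta> * (M * \<theta> ^ (n div k - 1))"
        unfolding \<theta>_def by (simp add: sum_distrib_right)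
      also have "\<dots> = M * \<theta> ^ (n div k)"
        using q1 by (cases "n div k") (auto simp: algebra_simps)
      finally show ?thesis .
    qed
  qed
  have fl: "filterlim (\<lambda>n. n div k) at_top sequentially"
  proof (subst filterlim_at_top, intro allI)
    fix Z :: nat
    show "eventually (\<lambda>n. Z \<le> n div k) sequentially"
      unfolding eventually_sequentially
    proof (intro exI allI impI)
      fix n assume "Z * k \<le> n"
      hence "(Z*k) div k \<le> n div k" by (rule div_le_mono)
      thus "Z \<le> n div k" using k by simp
    qed
  qed
  have "(\<lambda>n. \<theta> ^ (n div k)) \<longlonglongrightarrow> 0"
    using filterlim_compose[OF LIMSEQ_power_zero fl, of \<theta>] th0 th1 by simp
  hence "(\<lambda>n. M * \<theta> ^ (n div k)) \<longlonglongrightarrow> 0"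
    using tendsto_mult_right_zero by blast
  thus ?thesis
    by (rule Lim_null_comparison[rotated]) (use bound Y0 in auto)
qed

lemma contr:
  fixes Z e :: "nat \<Rightarrow> real" and q :: real
  assumes Z0: "\<And>n. Z n \<ge> 0" and q0: "q \<ge> 0" and q1: "q < 1"
    and e: "e \<longlonglongrightarrow> 0"
    and rec: "\<And>n. Z (Suc n) \<le> q * Z n + e n"
  shows "Z \<longlonglongrightarrow> 0"
proof (rule LIMSEQ_I)
  fix r :: real assume r: "0 < r"
  have rr: "r * (1 - q) / 2 > 0" using r q1 by simp
  obtain N where N: "\<And>n. n \<ge> N \<Longrightarrow> norm (e n - 0) < r * (1 - q) / 2"
    using LIMSEQ_D[OF e rr] by blast
  have step: "Z (N + i) \<le> q ^ i * Z N + r / 2" for i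
  proof (induction i)
    case 0 then show ?case using r by simp
  next
    case (Suc i)
    have "e (N+i) \<le> r * (1 - q) / 2" using N[of "N+i"] by auto
    hence "Z (N + Suc i) \<le> q * Z (N+i) + r * (1 - q) / 2" using rec[of "N+i"] by simp
    also have "\<dots> \<le> q * (q ^ i * Z N + r / 2) + r * (1 - q) / 2"
      using Suc.IH q0 by (simp add: mult_left_mono)
    also have "\<dots> = q ^ Suc i * Z N + r / 2" by (simp add: field_simps)
    finally show ?case .
  qed
  have "(\<lambda>i. q ^ i * Z N) \<longlonglongrightarrow> 0"
    using LIMSEQ_power_zero[of q] q0 q1 tendsto_mult_left_zero by auto
  then obtain N2 where N2: "\<And>i. i \<ge> N2 \<Longrightarrow> norm (q ^ i * Z N - 0) < r / 2"
    using LIMSEQ_D[of _ 0 "r/2"] r by (metis half_gt_zero)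
  show "\<exists>no. \<forall>n\<ge>no. norm (Z n - 0) < r"
  proof (intro exI allI impI)
    fix n assume n: "N + N2 \<le> n"
    have "Z n = Z (N + (n - N))" using n by simp
    also have "\<dots> \<le> q ^ (n-N) * Z N + r/2" by (rule step)
    also have "\<dots> < r" proof -
      have "N2 \<le> n - N" using n by simp
      hence "\<bar>q ^ (n-N) * Z N\<bar> < r/2" using N2 by simp
      thus ?thesis by linarith
    qed
    finally show "norm (Z n - 0) < r" using Z0[of n] by simp
  qed
qed

theorem corollary1:
  fixes a :: "'a::{real_normed_algebra_1, banach}"
    and b :: "nat \<Rightarrow> 'a"
    and g :: "nat \<Rightarrow> 'a \<Rightarrow> 'a"
    and k :: nat and \<sigma> :: real
    and x :: "int \<Rightarrow> 'a"
  assumes k: "k \<ge> 1"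
    and sigma: "\<sigma> > 0"
    and g_bound: "\<And>n \<xi>. norm (g n \<xi>) \<le> \<sigma> * norm \<xi>"
    and a_inv: "invertible_elem a"
    and bk: "b k \<noteq> 0"
    and a_small: "norm a < 1"
    and char_eq: "(\<Sum>j=0..k. b j * a ^ (k - j)) = 0"
    and sum_small: "(\<Sum>i<k. norm (\<Sum>j=0..i. b j * a ^ (i - j))) < 1 / \<sigma>"
    and rec: "\<And>n::nat. x (int n + 1) =
                 a * x (int n) + g n (\<Sum>j=0..k. b j * x (int n - int j))"
  shows "(\<lambda>n. x (int n)) \<longlonglongrightarrow> 0"
proof -
  define y where "y = (\<lambda>n::nat. \<Sum>j=0..k. b j * x (int n - int j))"
  define u where "u = (\<lambda>n. g n (y n))"
  define c where "c = (\<lambda>i. \<Sum>j=0..i. b j * a ^ (i - j))"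
  have rec': "\<And>n::nat. x (int n + 1) = a * x (int n) + u n"
    using rec unfolding u_def y_def by simp
  have yid: "y n = (\<Sum>i<k. c i * u (n-1-i))" if n: "k \<le> n" for n
  proof -
    have "y (n - k + k) = c k * x (int (n-k)) + (\<Sum>i<k. c i * u (n-k+k-1-i))"
      using conv_id[OF rec', where b=b and K=k and m="n-k"] unfolding y_def c_def by simp
    thus ?thesis using n char_eq unfolding c_def by simp
  qed
  have Ydec: "(\<lambda>n. norm (y n)) \<longlonglongrightarrow> 0"
  proof (rule decay[OF k, of _ "\<lambda>i. \<sigma> * norm (c i)"])
    show "(\<Sum>i<k. \<sigma> * norm (c i)) < 1"
      using sum_small sigma unfolding c_def by (simp add: sum_distrib_left[symmetric] field_simps)
    fix n assume n: "k \<le> n"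
    have "norm (y n) \<le> (\<Sum>i<k. norm (c i * u (n-1-i)))" using yid[OF n] by (simp add: norm_sum)
    also have "\<dots> \<le> (\<Sum>i<k. \<sigma> * norm (c i) * norm (y (n-1-i)))"
    proof (rule sum_mono)
      fix i
      have "norm (c i * u (n-1-i)) \<le> norm (c i) * norm (u (n-1-i))" by (rule norm_mult_ineq)
      also have "\<dots> \<le> norm (c i) * (\<sigma> * norm (y (n-1-i)))"
        using g_bound unfolding u_def by (simp add: mult_left_mono)
      finally show "norm (c i * u (n-1-i)) \<le> \<sigma> * norm (c i) * norm (y (n-1-i))"
        by (simp add: algebra_simps)
    qed
    finally show "norm (y n) \<le> (\<Sum>i<k. \<sigma> * norm (c i) * norm (y (n-1-i)))" .
  qed (use sigma in auto)
  have udec: "(\<lambda>n. norm (u n)) \<longlonglongrightarrow> 0"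
  proof (rule Lim_null_comparison[rotated])
    show "(\<lambda>n. \<sigma> * norm (y n)) \<longlonglongrightarrow> 0" using tendsto_mult_right_zero[OF Ydec] .
    show "\<forall>\<^sub>F n in sequentially. norm (norm (u n)) \<le> \<sigma> * norm (y n)"
      using g_bound unfolding u_def by simp
  qed
  have "(\<lambda>n. norm (x (int n))) \<longlonglongrightarrow> 0"
  proof (rule contr[OF _ _ a_small udec])
    fix n
    have "norm (x (int (Suc n))) = norm (a * x (int n) + u n)" using rec'[of n] by (simp add: add.commute)
    also have "\<dots> \<le> norm a * norm (x (int n)) + norm (u n)"
      by (meson norm_triangle_le norm_mult_ineq add_right_mono)
    finally show "norm (x (int (Suc n))) \<le> norm a * norm (x (int n)) + norm (u n)" .
  qed auto
  thus ?thesis by (simp add: tendsto_norm_zero_iff)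
qed

end
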